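(* Let $0\ne f,g\in L^2(\mathbb R,dx)$, $P\in\mathbb P$ and $0<\lambda<1$. Then \[ \int_{\mathcal S'_{\mathbb C}}S\big(\delta(\langle f,\cdot\rangle)\big)(\lambda Pu)\,\overline{S\big(\delta(\langle g,\cdot\rangle)\big)(\lambda Pu)}\,d\nu(u)=\frac{1}{2\pi\|f\|\|g\|}\,\frac{1}{\sqrt{1-\sigma_P^2\lambda^4}},\qquad \sigma_P:=\Big\langle\frac{Pf}{\|f\|},\frac{Pg}{\|g\|}\Big\rangle . \]
   Context: $\mathcal S$ is the real Schwartz space, $\mathcal S'$ the tempered distributions, $\langle\cdot,\cdot\rangle$ the (bilinear) dual pairing extending the $L^2(\mathbb R,dx)$ inner product, $\|\cdot\|$ the $L^2$ norm; the subscript $\mathbb C$ denotes complexification. For $0\ne h\in L^2(\mathbb R)$, Donsker's delta $\delta(\langle h,\cdot\rangle)$ is the Hida distribution on the white noise space whose $S$-transform is $S\delta(\langle h,\cdot\rangle)(\xi)=\frac{1}{\sqrt{2\pi}\|h\|}\exp\big(-\frac{\langle\xi,h\rangle^2}{2\|h\|^2}\big)$, $\xi\in\mathcal S_{\mathbb C}$. $\nu$ is the Gaussian measure on $\mathcal S'_{\mathbb C}$ with $\int\exp(i\,\mathrm{Re}\langle h,\bar u\rangle)d\nu(u)=\exp(-\tfrac14\langle h,\bar h\rangle)$, $h\in\mathcal S_{\mathbb C}$ (real and imaginary parts independent, each Gaussian with covariance $\tfrac12$ times the $L^2$ inner product). $\mathbb P$ is the set of maps $P=\sum_{m=1}^k\langle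 e_m,\cdot\rangle e_m:\mathcal S'_{\mathbb C}\to\mathcal S_{\mathbb C}$ with $e_1,\dots,e_k\in\mathcal S$ orthonormal in $L^2(\mathbb R)$, $k\in\mathbb N$; $P$ also acts on $L^2(\mathbb R)$ by the same formula. *)

theory Defs
  imports "HOL-Probability.Probability"
begin

text \<open>The real Hilbert space L^2(R,dx) is modelled by an abstract real inner product
space 'h; the real Schwartz space S is modelled by a linear subspace T of 'h.
An element xi of the complexification S_C (or L^2_C) is a pair (Re xi, Im xi).\<close>

definition pairC :: "'h::real_inner \<times> 'h \<Rightarrow> 'h \<Rightarrow> complex" where
  "pairC \<xi> h = complex_of_real (fst \<xi> \<bullet> h) + \<i> * complex_of_real (snd \<xi> \<bullet> h)"

definition S_donsker :: "'h::real_inner \<Rightarrow> 'h \<times> 'h \<Rightarrow> complex" where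
  "S_donsker h \<xi> =
     exp (- (pairC \<xi> h)\<^sup>2 / complex_of_real (2 * (norm h)\<^sup>2))
       / complex_of_real (sqrt (2 * pi) * norm h)"

text \<open>A (complex) tempered distribution u is represented by its action on real test
functions, u :: 'h => complex (extended complex-linearly to S_C).
The map P = sum_m <e_m,.> e_m applied to u, giving an element of S_C.\<close>
definition projP :: "nat \<Rightarrow> (nat \<Rightarrow> 'h::real_inner) \<Rightarrow> ('h \<Rightarrow> complex) \<Rightarrow> 'h \<times> 'h" where
  "projP k e u = ((\<Sum>m\<in>{1..k}. Re (u (e m)) *\<^sub>R e m), (\<Sum>m\<in>{1..k}. Im (u (e m)) *\<^sub>R e m))"

definition projL2 :: "nat \<Rightarrow> (nat \<Rightarrow> 'h::real_inner) \<Rightarrow> 'h \<Rightarrow> 'h" where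
  "projL2 k e f = (\<Sum>m\<in>{1..k}. (e m \<bullet> f) *\<^sub>R e m)"

text \<open>The Gaussian measure nu on S'_C, realised as the law of a random complex
distribution U(.)(w) over a probability space M: each sample U(.)(w) is real-linear
on the test space T, and for h = a + i b in S_C (a, b in T),
  integral exp(i Re <h, conj u>) dnu(u) = exp(-<h, conj h>/4),
where <h, conj u> = conj(u a) + i conj(u b) and <h, conj h> = |a|^2 + |b|^2.\<close>
definition complex_white_noise ::
  "'h::real_inner set \<Rightarrow> 'w measure \<Rightarrow> ('h \<Rightarrow> 'w \<Rightarrow> complex) \<Rightarrow> bool" where
  "complex_white_noise T M U \<longleftrightarrow>
     prob_space M \<and>
     (\<forall>a\<in>T. \<forall>b\<in>T. \<forall>r s::real. r *\<^sub>R a + s *\<^sub>R b \<in> T) \<and>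
     (\<forall>h\<in>T. U h \<in> borel_measurable M) \<and>
     (\<forall>w\<in>space M. \<forall>a\<in>T. \<forall>b\<in>T. \<forall>r s::real.
         U (r *\<^sub>R a + s *\<^sub>R b) w = complex_of_real r * U a w + complex_of_real s * U b w) \<and>
     (\<forall>a\<in>T. \<forall>b\<in>T.
         (\<integral>w. exp (\<i> * complex_of_real (Re (cnj (U a w) + \<i> * cnj (U b w)))) \<partial>M)
           = exp (- complex_of_real ((norm a)\<^sup>2 + (norm b)\<^sup>2) / 4))"

end

theory Submission
  imports Defs "HOL-Complex_Analysis.Complex_Analysis"
begin

lemma exp_partial_le:
  fixes x :: real assumes "0 \<le> x" "finite I"
  shows "(\<Sum>n\<in>I. x^n / fact n) \<le> exp x"
proof -
  have s: "summable (\<lambda>n. x^n / fact n)"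
    using summable_exp_generic[of x] by (simp add: divide_inverse_commute field_class.field_divide_inverse)
  have "(\<Sum>n\<in>I. x^n / fact n) \<le> (\<Sum>n. x^n / fact n)"
    by (rule sum_le_suminf[OF s assms(2)]) (use assms in auto)
  also have "\<dots> = exp x" by (simp add: exp_def divide_inverse_commute field_class.field_divide_inverse)
  finally show ?thesis .
qed

lemma exp_term_le:
  fixes x :: real assumes "0 \<le> x"
  shows "x^n / fact n \<le> exp x"
  using exp_partial_le[OF assms, of "{n}"] by simp

lemma AC:
  fixes N :: "'w measure" and X Y :: "'w \<Rightarrow> real" and A B C :: real and z :: complex
  assumes N: "prob_space N"
    and Xm[measurable]: "X \<in> borel_measurable N" and Ym[measurable]: "Y \<in> borel_measurable N"
    and int: "\<And>t. integrable N (\<lambda>w. exp (t * X w))"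
    and ch: "\<And>r. (\<integral>w. exp (\<i> * complex_of_real (r * X w + Y w)) \<partial>N)
               = exp (- complex_of_real (A*r^2 + 2*B*r + C) / 2)"
  shows "(\<integral>w. exp (z * complex_of_real (X w) + \<i> * complex_of_real (Y w)) \<partial>N)
         = exp ((z^2 * A + 2*\<i>*z*B - C)/2)"
proof -
  interpret prob_space N by fact
  have intabs: "integrable N (\<lambda>w. exp (s * \<bar>X w\<bar>))" for s
  proof (rule Bochner_Integration.integrable_bound)
    show "integrable N (\<lambda>w. exp (s * X w) + exp (- s * X w))"
      using int[of s] int[of "-s"] by (intro Bochner_Integration.integrable_add) auto
    show "AE w in N. norm (exp (s * \<bar>X w\<bar>)) \<le> norm (exp (s * X w) + exp (- s * X w))"
    proof (rule AE_I2)
      fix w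
      have "exp (s * \<bar>X w\<bar>) = exp (s * X w) \<or> exp (s * \<bar>X w\<bar>) = exp (- s * X w)"
        by (cases "X w \<ge> 0") auto
      moreover have "exp (s * X w) > 0" "exp (- s * X w) > 0" by auto
      ultimately show "norm (exp (s * \<bar>X w\<bar>)) \<le> norm (exp (s * X w) + exp (- s * X w))"
        by auto
    qed
  qed auto
  define c where "c n = (\<integral>w. complex_of_real (X w) ^ n * exp (\<i> * complex_of_real (Y w)) \<partial>N) / fact n" for n
  have S: "(\<lambda>n. c n * z^n) sums (\<integral>w. exp (z * complex_of_real (X w) + \<i> * complex_of_real (Y w)) \<partial>N)" for z
  proof -
    define f where "f n w = ((z * X w)^n /\<^sub>R fact n) * exp (\<i> * complex_of_real (Y w))" for n w
    have nf: "norm (f n w) = (cmod z * \<bar>X w\<bar>)^n / fact n" for n w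
      by (simp add: f_def norm_mult norm_power norm_divide field_simps)
    have fmeas[measurable]: "f n \<in> borel_measurable N" for n
      unfolding f_def by measurable
    have fint: "integrable N (f n)" for n
    proof (rule Bochner_Integration.integrable_bound)
      show "integrable N (\<lambda>w. exp (cmod z * \<bar>X w\<bar>))" by (rule intabs)
      show "AE w in N. norm (f n w) \<le> norm (exp (cmod z * \<bar>X w\<bar>))"
        using exp_term_le by (auto simp: nf)
    qed (use fmeas in auto)
    have sw: "(\<lambda>n. f n w) sums exp (z * complex_of_real (X w) + \<i> * complex_of_real (Y w))" for w
      unfolding f_def exp_add using exp_converges[of "z * complex_of_real (X w)"]
      by (intro sums_mult2) auto
    have sn: "summable (\<lambda>n. norm (f n w))" for w
      unfolding nf using summable_exp_generic[of "cmod z * \<bar>X w\<bar>"]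
      by (simp add: divide_inverse_commute field_class.field_divide_inverse)
    have si: "summable (\<lambda>n. \<integral>w. norm (f n w) \<partial>N)"
    proof (rule summableI_nonneg_bounded)
      show "0 \<le> (\<integral>w. norm (f n w) \<partial>N)" for n by simp
      show "(\<Sum>n<m. \<integral>w. norm (f n w) \<partial>N) \<le> (\<integral>w. exp (cmod z * \<bar>X w\<bar>) \<partial>N)" for m
      proof -
        have "(\<Sum>n<m. \<integral>w. norm (f n w) \<partial>N) = (\<integral>w. (\<Sum>n<m. norm (f n w)) \<partial>N)"
          using Bochner_Integration.integral_sum[where I="{..<m}" and M=N and f="\<lambda>n w. norm (f n w)"] fint by auto
        also have "\<dots> \<le> (\<integral>w. exp (cmod z * \<bar>X w\<bar>) \<partial>N)"
        proof (rule integral_mono)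
          show "integrable N (\<lambda>w. \<Sum>n<m. norm (f n w))"
            using fint by (intro Bochner_Integration.integrable_sum integrable_norm) auto
          show "integrable N (\<lambda>w. exp (cmod z * \<bar>X w\<bar>))" by (rule intabs)
          show "(\<Sum>n<m. norm (f n w)) \<le> exp (cmod z * \<bar>X w\<bar>)" for w
            unfolding nf by (rule exp_partial_le) auto
        qed
        finally show ?thesis .
      qed
    qed
    have "(\<lambda>n. integral\<^sup>L N (f n)) sums (\<integral>w. (\<Sum>n. f n w) \<partial>N)"
      by (rule sums_integral[OF fint _ si]) (use sn in auto)
    moreover have "(\<Sum>n. f n w) = exp (z * complex_of_real (X w) + \<i> * complex_of_real (Y w))" for w
      using sw[of w] by (simp add: sums_iff)
    moreover have "integral\<^sup>L N (f n) = c n * z^n" for n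
    proof -
      have "f n = (\<lambda>w. (z^n / fact n) * (complex_of_real (X w) ^ n * exp (\<i> * complex_of_real (Y w))))"
        by (rule ext) (simp add: f_def scaleR_conv_of_real power_mult_distrib field_simps)
      then show ?thesis by (simp add: c_def field_simps)
    qed
    ultimately show ?thesis by simp
  qed
  define G :: "complex \<Rightarrow> complex" where "G z = (\<integral>w. exp (z * complex_of_real (X w) + \<i> * complex_of_real (Y w)) \<partial>N)" for z
  have Geq: "G = (\<lambda>z. \<Sum>n. c n * z^n)"
    using S by (auto simp: G_def sums_iff fun_eq_iff)
  have Ghol: "G holomorphic_on UNIV"
  proof -
    have "summable (\<lambda>n. c n * y^n)" for y using S[of y] by (simp add: sums_iff)
    then have "\<And>x. ((\<lambda>x. \<Sum>n. c n * x^n) has_field_derivative (\<Sum>n. diffs c n * x^n)) (at x)"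
      by (intro termdiffs_strong_converges_everywhere) auto
    then show ?thesis unfolding Geq holomorphic_on_def field_differentiable_def
      by (auto intro: has_field_derivative_at_within)
  qed
  define H :: "complex \<Rightarrow> complex" where "H z = exp ((z^2 * A + 2*\<i>*z*B - C)/2)" for z
  have Hhol: "H holomorphic_on UNIV" unfolding H_def by (intro holomorphic_intros) auto
  have "(\<lambda>z. G z - H z) z = 0"
  proof (rule analytic_continuation[where f="\<lambda>z. G z - H z" and w=z and S=UNIV and U="range (\<lambda>r. \<i> * complex_of_real r)" and \<xi>=0])
    show "(\<lambda>z. G z - H z) holomorphic_on UNIV" using Ghol Hhol by (intro holomorphic_intros)
    show "0 islimpt range (\<lambda>r. \<i> * complex_of_real r)"
    proof (rule islimptI)
      fix T :: "complex set" assume "0 \<in> T" "open T"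
      then obtain e where e: "e > 0" "ball 0 e \<subseteq> T" using open_contains_ball_eq by blast
      show "\<exists>y\<in>range (\<lambda>r. \<i> * complex_of_real r). y \<in> T \<and> y \<noteq> 0"
      proof (rule bexI[of _ "\<i> * complex_of_real (e/2)"])
        have "\<i> * complex_of_real (e/2) \<in> ball 0 e" using e by (simp add: norm_mult)
        then show "\<i> * complex_of_real (e/2) \<in> T \<and> \<i> * complex_of_real (e/2) \<noteq> 0"
          using e by auto
      qed (rule rangeI)
    qed
    show "(\<lambda>z. G z - H z) u = 0" if "u \<in> range (\<lambda>r. \<i> * complex_of_real r)" for u
    proof -
      from that obtain r where u: "u = \<i> * complex_of_real r" by auto
      have "G u = (\<integral>w. exp (\<i> * complex_of_real (r * X w + Y w)) \<partial>N)"
        unfolding G_def u by (simp add: algebra_simps)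
      also have "\<dots> = H u" unfolding ch H_def u
        by (rule arg_cong[where f=exp]) (simp add: power_mult_distrib field_simps)
      finally show ?thesis by simp
    qed
  qed auto
  then show ?thesis by (simp add: G_def H_def)
qed

abbreviation "gam \<equiv> std_normal_distribution"

lemma prob_gam: "prob_space gam"
  using prob_space_normal_density[of 1 0] by simp

lemma gam_exp_integrable: "integrable gam (\<lambda>x. exp (t * x))"
proof -
  have eq: "std_normal_density x * exp (t * x) = exp (t^2/2) * normal_density t 1 x" for x
  proof -
    have "exp (- (x\<^sup>2 / 2)) * exp (t * x) = exp (t^2/2) * exp (- ((x - t)\<^sup>2 / 2))"
      unfolding mult_exp_exp by (rule arg_cong[where f=exp]) (simp add: power2_eq_square field_simps)
    then show ?thesis by (simp add: std_normal_density_def normal_density_def)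
  qed
  have "integrable lborel (\<lambda>x. exp (t^2/2) * normal_density t 1 x)" by auto
  then show ?thesis by (subst integrable_density) (auto simp: eq)
qed

lemma gam_cexp_integrable: "complex_integrable gam (\<lambda>x. exp (z * complex_of_real x))"
proof (rule Bochner_Integration.integrable_bound)
  show "integrable gam (\<lambda>x. exp (Re z * x))" by (rule gam_exp_integrable)
  show "AE x in gam. norm (exp (z * complex_of_real x)) \<le> norm (exp (Re z * x))"
    by auto
qed auto

lemma gam_mgf: "(\<integral>x. exp (z * complex_of_real x) \<partial>gam) = exp (z^2 / 2)"
proof -
  have "(\<integral>x. exp (z * complex_of_real x + \<i> * complex_of_real ((\<lambda>_. 0::real) x)) \<partial>gam)
         = exp ((z^2 * complex_of_real (1::real) + 2*\<i>*z*complex_of_real (0::real) - complex_of_real (0::real))/2)"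
  proof (rule AC[where X="\<lambda>x. x" and Y="\<lambda>_. 0::real"])
    show "prob_space gam" by (rule prob_gam)
    show "integrable gam (\<lambda>w. exp (t * w))" for t by (rule gam_exp_integrable)
    show "(\<integral>w. exp (\<i> * complex_of_real (r * w + 0)) \<partial>gam) =
          exp (- complex_of_real (1 * r\<^sup>2 + 2 * 0 * r + 0) / 2)" for r
    proof -
      have "char gam r = complex_of_real (exp (-(r^2)/2))" using char_std_normal_distribution by simp
      moreover have "complex_of_real (exp (-(r^2)/2)) = exp (- complex_of_real (1 * r\<^sup>2 + 2 * 0 * r + 0) / 2)"
        by (subst exp_of_real[symmetric]) simp
      ultimately show ?thesis by (simp add: char_def)
    qed
  qed auto
  then show ?thesis by simp
qed

lemma gam_rmgf: "(\<integral>x. exp (t * x) \<partial>gam) = exp (t^2 / 2)"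
proof -
  have "complex_of_real (\<integral>x. exp (t * x) \<partial>gam) = (\<integral>x. complex_of_real (exp (t * x)) \<partial>gam)"
    by simp
  also have "\<dots> = (\<integral>x. exp (complex_of_real t * complex_of_real x) \<partial>gam)"
    by (simp add: exp_of_real[symmetric])
  also have "\<dots> = complex_of_real (exp (t^2/2))"
    unfolding gam_mgf by (subst exp_of_real[symmetric]) simp
  finally show ?thesis by simp
qed

lemma gam_quad:
  assumes "\<beta> < 1"
  shows "integrable gam (\<lambda>x. exp (\<beta> * x^2 / 2))"
    and "(\<integral>x. exp (\<beta> * x^2 / 2) \<partial>gam) = 1 / sqrt (1 - \<beta>)"
proof -
  define s where "s = 1 / sqrt (1 - \<beta>)"
  have s0: "s > 0" using assms by (simp add: s_def)
  have s2: "s^2 = 1 / (1 - \<beta>)" using assms by (simp add: s_def power_divide)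
  have eq: "std_normal_density x * exp (\<beta> * x^2 / 2) = s * normal_density 0 s x" for x
  proof -
    have "sqrt (2 * pi * s\<^sup>2) = sqrt (2 * pi) * s" using s0 by (simp add: real_sqrt_mult)
    moreover have "- x\<^sup>2 / (2 * s\<^sup>2) = - x\<^sup>2 / 2 + \<beta> * x^2 / 2" using assms by (simp add: s2 field_simps)
    ultimately show ?thesis using s0
      by (simp add: std_normal_density_def normal_density_def mult_exp_exp)
  qed
  have i: "integrable lborel (\<lambda>x. s * normal_density 0 s x)"
    using s0 by (intro Bochner_Integration.integrable_mult_right) auto
  then show "integrable gam (\<lambda>x. exp (\<beta> * x^2 / 2))"
    by (subst integrable_density) (auto simp: eq s0)
  have "(\<integral>x. exp (\<beta> * x^2 / 2) \<partial>gam) = (\<integral>x. s * normal_density 0 s x \<partial>lborel)"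
    by (subst integral_density) (auto simp: eq s0)
  also have "\<dots> = s" using s0 by simp
  finally show "(\<integral>x. exp (\<beta> * x^2 / 2) \<partial>gam) = 1 / sqrt (1 - \<beta>)" by (simp add: s_def)
qed

definition Lf :: "('h \<Rightarrow> 'w \<Rightarrow> complex) \<Rightarrow> 'h \<Rightarrow> 'h \<Rightarrow> 'w \<Rightarrow> real" where
  "Lf U p q w = Re (U p w) + Im (U q w)"

locale cwn =
  fixes T :: "'h::real_inner set" and M :: "'w measure" and U :: "'h \<Rightarrow> 'w \<Rightarrow> complex"
  assumes cw: "complex_white_noise T M U"
begin

lemma prob: "prob_space M" using cw by (simp add: complex_white_noise_def)

lemma lin_T: "a \<in> T \<Longrightarrow> b \<in> T \<Longrightarrow> r *\<^sub>R a + s *\<^sub>R b \<in> T"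
  using cw by (simp add: complex_white_noise_def)

lemma meas_U[measurable]: "h \<in> T \<Longrightarrow> U h \<in> borel_measurable M"
  using cw by (simp add: complex_white_noise_def)

lemma lin_U: "w \<in> space M \<Longrightarrow> a \<in> T \<Longrightarrow> b \<in> T \<Longrightarrow>
   U (r *\<^sub>R a + s *\<^sub>R b) w = complex_of_real r * U a w + complex_of_real s * U b w"
  using cw by (simp add: complex_white_noise_def)

lemma char_L: "a \<in> T \<Longrightarrow> b \<in> T \<Longrightarrow>
   (\<integral>w. exp (\<i> * complex_of_real (Lf U a b w)) \<partial>M) = exp (- complex_of_real ((norm a)\<^sup>2 + (norm b)\<^sup>2) / 4)"
proof -
  assume ab: "a \<in> T" "b \<in> T"
  have "(\<integral>w. exp (\<i> * complex_of_real (Re (cnj (U a w) + \<i> * cnj (U b w)))) \<partial>M)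
           = exp (- complex_of_real ((norm a)\<^sup>2 + (norm b)\<^sup>2) / 4)"
    using cw ab unfolding complex_white_noise_def by blast
  then show ?thesis by (simp add: Lf_def)
qed

lemma scale_T: "a \<in> T \<Longrightarrow> r *\<^sub>R a \<in> T"
  using lin_T[of a a r 0] by simp

lemma add_T: "a \<in> T \<Longrightarrow> b \<in> T \<Longrightarrow> a + b \<in> T"
  using lin_T[of a b 1 1] by simp

lemma scale_U: "w \<in> space M \<Longrightarrow> a \<in> T \<Longrightarrow> U (r *\<^sub>R a) w = complex_of_real r * U a w"
  using lin_U[of w a a r 0] by simp

lemma add_U: "w \<in> space M \<Longrightarrow> a \<in> T \<Longrightarrow> b \<in> T \<Longrightarrow> U (a + b) w = U a w + U b w"
  using lin_U[of w a b 1 1] by simp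

lemma meas_L[measurable]: "p \<in> T \<Longrightarrow> q \<in> T \<Longrightarrow> Lf U p q \<in> borel_measurable M"
  unfolding Lf_def[abs_def] by measurable

lemma lin_L: "w \<in> space M \<Longrightarrow> p \<in> T \<Longrightarrow> q \<in> T \<Longrightarrow> p' \<in> T \<Longrightarrow> q' \<in> T \<Longrightarrow>
   Lf U (r *\<^sub>R p + p') (r *\<^sub>R q + q') w = r * Lf U p q w + Lf U p' q' w"
  using lin_U[of w p p' r 1] lin_U[of w q q' r 1] by (simp add: Lf_def algebra_simps)

lemma law_L:
  assumes pq: "p \<in> T" "q \<in> T"
  shows "distr M borel (Lf U p q) = distr gam borel (\<lambda>x. sqrt (((norm p)\<^sup>2 + (norm q)\<^sup>2) / 2) * x)"
proof -
  interpret prob_space M by (rule prob)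
  define s where "s = sqrt (((norm p)\<^sup>2 + (norm q)\<^sup>2) / 2)"
  have rd1: "real_distribution (distr M borel (Lf U p q))"
    using pq by (intro real_distribution_distr) simp
  have rd2: "real_distribution (distr gam borel (\<lambda>x. s * x))"
    by (intro prob_space.real_distribution_distr prob_gam) simp
  have "char (distr M borel (Lf U p q)) r = char (distr gam borel (\<lambda>x. s * x)) r" for r
  proof -
    have 0: "0 \<in> T" using scale_T[OF pq(1), of 0] by simp
    have "char (distr M borel (Lf U p q)) r = (\<integral>w. exp (\<i> * complex_of_real (r * Lf U p q w)) \<partial>M)"
      unfolding char_def using pq by (subst integral_distr) auto
    also have "\<dots> = (\<integral>w. exp (\<i> * complex_of_real (Lf U (r *\<^sub>R p + 0) (r *\<^sub>R q + 0) w)) \<partial>M)"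
    proof (rule Bochner_Integration.integral_cong)
      fix w assume w: "w \<in> space M"
      have "Lf U (r *\<^sub>R p + 0) (r *\<^sub>R q + 0) w = r * Lf U p q w + Lf U 0 0 w"
        by (rule lin_L[OF w pq 0 0])
      moreover have "Lf U 0 0 w = 0" using scale_U[OF w 0, of 0] by (simp add: Lf_def)
      ultimately show "exp (\<i> * complex_of_real (r * Lf U p q w)) = exp (\<i> * complex_of_real (Lf U (r *\<^sub>R p + 0) (r *\<^sub>R q + 0) w))"
        by simp
    qed simp
    also have "\<dots> = exp (- complex_of_real ((norm (r *\<^sub>R p + 0))\<^sup>2 + (norm (r *\<^sub>R q + 0))\<^sup>2) / 4)"
      by (rule char_L) (use pq 0 scale_T in auto)
    also have "\<dots> = complex_of_real (exp (- ((r * s)\<^sup>2) / 2))"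
    proof -
      have X: "(norm (r *\<^sub>R p + 0))\<^sup>2 + (norm (r *\<^sub>R q + 0))\<^sup>2 = 2 * (r * s)\<^sup>2"
        unfolding s_def power_mult_distrib by (simp add: power_mult_distrib algebra_simps)
      have e: "- complex_of_real (2 * (r * s)\<^sup>2) / 4 = complex_of_real (- ((r * s)\<^sup>2) / 2)" by simp
      show ?thesis unfolding X e exp_of_real ..
    qed
    also have "\<dots> = char gam (r * s)" using char_std_normal_distribution by simp
    also have "\<dots> = char (distr gam borel (\<lambda>x. s * x)) r"
      unfolding char_def by (subst integral_distr) (auto simp: mult.assoc)
    finally show ?thesis .
  qed
  then show ?thesis unfolding s_def[symmetric]
    using Levy_uniqueness[OF rd1 rd2] by auto
qed

lemma int_gam_distr:
  fixes g :: "real \<Rightarrow> real"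
  assumes [measurable]: "g \<in> borel_measurable borel" and p: "p \<in> T" "q \<in> T"
  shows "integrable M (\<lambda>w. g (Lf U p q w)) \<longleftrightarrow>
         integrable gam (\<lambda>x. g (sqrt (((norm p)\<^sup>2 + (norm q)\<^sup>2) / 2) * x))"
proof -
  have "integrable M (\<lambda>w. g (Lf U p q w)) \<longleftrightarrow> integrable (distr M borel (Lf U p q)) g"
    using p by (subst integrable_distr_eq) auto
  also have "\<dots> \<longleftrightarrow> integrable (distr gam borel (\<lambda>x. sqrt (((norm p)\<^sup>2 + (norm q)\<^sup>2) / 2) * x)) g"
    using law_L[OF p] by simp
  also have "\<dots> \<longleftrightarrow> integrable gam (\<lambda>x. g (sqrt (((norm p)\<^sup>2 + (norm q)\<^sup>2) / 2) * x))"
    by (subst integrable_distr_eq) auto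
  finally show ?thesis .
qed

lemma int_mgf_L: "p \<in> T \<Longrightarrow> q \<in> T \<Longrightarrow> integrable M (\<lambda>w. exp (t * Lf U p q w))"
proof -
  assume pq: "p \<in> T" "q \<in> T"
  have "integrable gam (\<lambda>x. exp (t * (sqrt (((norm p)\<^sup>2 + (norm q)\<^sup>2) / 2) * x)))"
    using gam_exp_integrable[of "t * sqrt (((norm p)\<^sup>2 + (norm q)\<^sup>2) / 2)"] by (simp add: mult.assoc)
  then show ?thesis using int_gam_distr[of "\<lambda>x. exp (t * x)" p q] pq by simp
qed

lemma int_sq_L:
  assumes "p \<in> T" "q \<in> T" "\<beta> * ((norm p)\<^sup>2 + (norm q)\<^sup>2) < 1"
  shows "integrable M (\<lambda>w. exp (\<beta> * (Lf U p q w)\<^sup>2))"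
proof -
  define s where "s = sqrt (((norm p)\<^sup>2 + (norm q)\<^sup>2) / 2)"
  have s2: "s^2 = ((norm p)\<^sup>2 + (norm q)\<^sup>2) / 2" unfolding s_def by simp
  have "integrable gam (\<lambda>x. exp ((2 * \<beta> * s^2) * x^2 / 2))"
    using assms(3) by (intro gam_quad) (simp add: s2)
  moreover have "(\<lambda>x. exp ((2 * \<beta> * s^2) * x^2 / 2)) = (\<lambda>x. exp (\<beta> * (s * x)^2))"
    by (simp add: power_mult_distrib)
  ultimately show ?thesis using int_gam_distr[of "\<lambda>x. exp (\<beta> * x^2)" p q] assms
    by (simp add: s_def)
qed

lemma AC2:
  assumes T: "p \<in> T" "q \<in> T" "p' \<in> T" "q' \<in> T"
  shows "(\<integral>w. exp (complex_of_real (Lf U p q w) + \<i> * complex_of_real (Lf U p' q' w)) \<partial>M)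
    = exp (complex_of_real ((norm p)\<^sup>2 + (norm q)\<^sup>2 - (norm p')\<^sup>2 - (norm q')\<^sup>2) / 4
           + \<i> * complex_of_real (inner p p' + inner q q') / 2)"
proof -
  define A where "A = ((norm p)\<^sup>2 + (norm q)\<^sup>2) / 2"
  define B where "B = (inner p p' + inner q q') / 2"
  define C where "C = ((norm p')\<^sup>2 + (norm q')\<^sup>2) / 2"
  have "(\<integral>w. exp (1 * complex_of_real (Lf U p q w) + \<i> * complex_of_real (Lf U p' q' w)) \<partial>M)
         = exp (((1::complex)^2 * complex_of_real A + 2*\<i>*1*complex_of_real B - complex_of_real C)/2)"
  proof (rule AC)
    show "prob_space M" by (rule prob)
    show "Lf U p q \<in> borel_measurable M" "Lf U p' q' \<in> borel_measurable M" using T by auto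
    show "integrable M (\<lambda>w. exp (t * Lf U p q w))" for t using T(1,2) by (rule int_mgf_L)
    show "(\<integral>w. exp (\<i> * complex_of_real (r * Lf U p q w + Lf U p' q' w)) \<partial>M) =
          exp (- complex_of_real (A * r\<^sup>2 + 2 * B * r + C) / 2)" for r
    proof -
      have "(\<integral>w. exp (\<i> * complex_of_real (r * Lf U p q w + Lf U p' q' w)) \<partial>M)
          = (\<integral>w. exp (\<i> * complex_of_real (Lf U (r *\<^sub>R p + p') (r *\<^sub>R q + q') w)) \<partial>M)"
        by (rule Bochner_Integration.integral_cong) (auto simp: lin_L T)
      also have "\<dots> = exp (- complex_of_real ((norm (r *\<^sub>R p + p'))\<^sup>2 + (norm (r *\<^sub>R q + q'))\<^sup>2) / 4)"
        by (rule char_L) (use T add_T scale_T in auto)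
      also have "(norm (r *\<^sub>R p + p'))\<^sup>2 + (norm (r *\<^sub>R q + q'))\<^sup>2 = 2 * (A * r\<^sup>2 + 2 * B * r + C)"
        unfolding A_def B_def C_def power2_norm_eq_inner
        by (simp add: inner_add_left inner_add_right inner_commute algebra_simps power2_eq_square) (simp add: field_simps)
      also have "exp (- complex_of_real (2 * (A * r\<^sup>2 + 2 * B * r + C)) / 4) = exp (- complex_of_real (A * r\<^sup>2 + 2 * B * r + C) / 2)"
        by (rule arg_cong[where f=exp]) simp
      finally show ?thesis .
    qed
  qed
  also have "exp (((1::complex)^2 * complex_of_real A + 2*\<i>*1*complex_of_real B - complex_of_real C)/2)
     = exp (complex_of_real ((norm p)\<^sup>2 + (norm q)\<^sup>2 - (norm p')\<^sup>2 - (norm q')\<^sup>2) / 4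
           + \<i> * complex_of_real (inner p p' + inner q q') / 2)"
    by (rule arg_cong[where f=exp]) (simp add: A_def B_def C_def field_simps)
  finally show ?thesis by simp
qed

end

lemma expbound: "exp (u::real) * exp v \<le> (exp (2 * u) + exp (2 * v)) / 2"
proof -
  have "0 \<le> (exp u - exp v)^2" by simp
  then show ?thesis unfolding exp_double by (simp add: power2_eq_square algebra_simps)
qed

context cwn
begin

lemma zero_U: "w \<in> space M \<Longrightarrow> a \<in> T \<Longrightarrow> U 0 w = 0"
  using scale_U[of w a 0] by simp

lemma Im_L: "w \<in> space M \<Longrightarrow> a \<in> T \<Longrightarrow> h \<in> T \<Longrightarrow> Im (U h w) = Lf U 0 h w"
  using zero_U[of w a] by (simp add: Lf_def)

lemma pair_gam: "pair_sigma_finite M gam"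
  unfolding pair_sigma_finite_def using prob prob_gam
  by (simp add: prob_space_imp_sigma_finite)

context
  fixes a b :: 'h and lam :: real
  assumes aT: "a \<in> T" and bT: "b \<in> T" and na: "norm a \<le> 1" and nb: "norm b \<le> 1"
    and l0: "0 < lam" and l1: "lam < 1"
begin

lemma Ua_meas: "U a \<in> borel_measurable M" using aT by (rule meas_U)
lemma Ub_meas: "U b \<in> borel_measurable M" using bT by (rule meas_U)

lemma int_bound:
  assumes hT: "h \<in> T" "norm h \<le> 1"
  shows "integrable M (\<lambda>w. exp (t * Lf U 0 a w) * exp ((lam * Lf U 0 h w)\<^sup>2 / 2))"
proof -
  have 0: "0 \<in> T" using scale_T[OF aT, of 0] by simp
  have i1: "integrable M (\<lambda>w. exp ((2 * t) * Lf U 0 a w))" by (rule int_mgf_L[OF 0 aT])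
  have "lam^2 * ((norm (0::'h))\<^sup>2 + (norm h)\<^sup>2) < 1"
  proof -
    have "(norm h)^2 \<le> 1" using hT(2) by (simp add: power_le_one)
    moreover have "lam^2 < 1" using l0 l1 by (simp add: power_less_one_iff)
    moreover have "lam^2 \<ge> 0" by simp
    ultimately have "lam^2 * (norm h)^2 < 1"
      by (metis dual_order.strict_trans2 mult_left_le mult_of_nat_commute)
    then show ?thesis by simp
  qed
  then have i2: "integrable M (\<lambda>w. exp (lam^2 * (Lf U 0 h w)\<^sup>2))" by (rule int_sq_L[OF 0 hT(1)])
  have [measurable]: "Lf U 0 a \<in> borel_measurable M" "Lf U 0 h \<in> borel_measurable M"
    using 0 aT hT by (auto intro: meas_L)
  show ?thesis
  proof (rule Bochner_Integration.integrable_bound)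
    show "integrable M (\<lambda>w. (exp ((2 * t) * Lf U 0 a w) + exp (lam^2 * (Lf U 0 h w)\<^sup>2)) / 2)"
      using i1 i2 by auto
    show "AE w in M. norm (exp (t * Lf U 0 a w) * exp ((lam * Lf U 0 h w)\<^sup>2 / 2))
          \<le> norm ((exp ((2 * t) * Lf U 0 a w) + exp (lam^2 * (Lf U 0 h w)\<^sup>2)) / 2)"
    proof (rule AE_I2)
      fix w
      have "exp (t * Lf U 0 a w) * exp ((lam * Lf U 0 h w)\<^sup>2 / 2)
            \<le> (exp (2 * (t * Lf U 0 a w)) + exp (2 * ((lam * Lf U 0 h w)\<^sup>2 / 2))) / 2"
        by (rule expbound)
      also have "\<dots> = (exp ((2 * t) * Lf U 0 a w) + exp (lam^2 * (Lf U 0 h w)\<^sup>2)) / 2"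
        by (simp add: power_mult_distrib mult.assoc)
      finally show "norm (exp (t * Lf U 0 a w) * exp ((lam * Lf U 0 h w)\<^sup>2 / 2))
          \<le> norm ((exp ((2 * t) * Lf U 0 a w) + exp (lam^2 * (Lf U 0 h w)\<^sup>2)) / 2)"
        by (simp add: add_pos_pos)
    qed
  qed (use 0 aT hT in auto)
qed

lemma stepA:
  "(\<integral>w. exp ((\<i> * complex_of_real lam * U a w) * complex_of_real x)
        * exp (- (complex_of_real lam * cnj (U b w))\<^sup>2 / 2) \<partial>M)
    = complex_of_real (exp ((lam^4 * (inner a b)\<^sup>2) * x\<^sup>2 / 2))"
proof -
  interpret prob_space M by (rule prob)
  interpret P: pair_sigma_finite M gam by (rule pair_gam)
  have 0: "0 \<in> T" using scale_T[OF aT, of 0] by simp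
  define \<Psi> where "\<Psi> w y = exp ((\<i> * complex_of_real lam * U a w) * complex_of_real x)
      * exp ((\<i> * complex_of_real lam * cnj (U b w)) * complex_of_real y)" for w y
  have \<Psi>m[measurable]: "case_prod \<Psi> \<in> borel_measurable (M \<Otimes>\<^sub>M gam)"
  proof -
    define ua where "ua = U a"
    define ub where "ub = U b"
    have [measurable]: "ua \<in> borel_measurable M" "ub \<in> borel_measurable M"
      unfolding ua_def ub_def by (rule Ua_meas, rule Ub_meas)
    have m1[measurable]: "(\<lambda>p. ua (fst p)) \<in> borel_measurable (M \<Otimes>\<^sub>M gam)"
      by (rule measurable_compose[OF measurable_fst]) simp
    have m2[measurable]: "(\<lambda>p. ub (fst p)) \<in> borel_measurable (M \<Otimes>\<^sub>M gam)"
      by (rule measurable_compose[OF measurable_fst]) simp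
    have m3[measurable]: "(\<lambda>p. snd p) \<in> borel_measurable (M \<Otimes>\<^sub>M gam)"
      by (rule measurable_compose[OF measurable_snd]) simp
    have cm: "cnj \<in> borel_measurable borel"
      by (rule borel_measurable_continuous_onI) (intro continuous_intros)
    have m4[measurable]: "(\<lambda>p. cnj (ub (fst p))) \<in> borel_measurable (M \<Otimes>\<^sub>M gam)"
      by (rule measurable_compose[OF m2 cm])
    have m5[measurable]: "(\<lambda>p. complex_of_real (snd p)) \<in> borel_measurable (M \<Otimes>\<^sub>M gam)"
      by (rule measurable_compose[OF m3 borel_measurable_of_real])
    have "(\<lambda>p. exp ((\<i> * complex_of_real lam * ua (fst p)) * complex_of_real x)
      * exp ((\<i> * complex_of_real lam * cnj (ub (fst p))) * complex_of_real (snd p))) \<in> borel_measurable (M \<Otimes>\<^sub>M gam)"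
      by measurable
    then show ?thesis unfolding \<Psi>_def[abs_def] ua_def ub_def by (simp add: case_prod_beta')
  qed
  have inner: "(\<integral>y. \<Psi> w y \<partial>gam) = exp ((\<i> * complex_of_real lam * U a w) * complex_of_real x)
        * exp (- (complex_of_real lam * cnj (U b w))\<^sup>2 / 2)" for w
  proof -
    have "(\<integral>y. \<Psi> w y \<partial>gam) = exp ((\<i> * complex_of_real lam * U a w) * complex_of_real x)
        * exp ((\<i> * complex_of_real lam * cnj (U b w))\<^sup>2 / 2)"
      unfolding \<Psi>_def by (simp add: gam_mgf)
    also have "exp ((\<i> * complex_of_real lam * cnj (U b w))\<^sup>2 / 2) = exp (- (complex_of_real lam * cnj (U b w))\<^sup>2 / 2)"
      by (rule arg_cong[where f=exp]) (simp add: power_mult_distrib)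
    finally show ?thesis .
  qed
  have n\<Psi>: "(\<integral>y. norm (\<Psi> w y) \<partial>gam) = exp ((- lam * x) * Im (U a w)) * exp ((lam * Im (U b w))\<^sup>2 / 2)" for w
  proof -
    have "norm (\<Psi> w y) = exp ((- lam * x) * Im (U a w)) * exp ((lam * Im (U b w)) * y)" for y
      unfolding \<Psi>_def by (simp add: norm_mult)
    then have "(\<integral>y. norm (\<Psi> w y) \<partial>gam) = exp ((- lam * x) * Im (U a w)) * (\<integral>y. exp ((lam * Im (U b w)) * y) \<partial>gam)"
      by simp
    also have "\<dots> = exp ((- lam * x) * Im (U a w)) * exp ((lam * Im (U b w))\<^sup>2 / 2)"
      by (simp only: gam_rmgf)
    finally show ?thesis .
  qed
  have int1: "integrable M (\<lambda>w. \<integral>y. norm (\<Psi> w y) \<partial>gam)"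
  proof -
    have "integrable M (\<lambda>w. exp ((- lam * x) * Lf U 0 a w) * exp ((lam * Lf U 0 b w)\<^sup>2 / 2))"
      by (rule int_bound[OF bT nb])
    then show ?thesis
      by (rule Bochner_Integration.integrable_cong[THEN iffD1, rotated 2])
         (auto simp: n\<Psi> Im_L[OF _ aT aT] Im_L[OF _ aT bT])
  qed
  have int2: "AE w in M. integrable gam (\<lambda>y. \<Psi> w y)"
    unfolding \<Psi>_def by (intro AE_I2 Bochner_Integration.integrable_mult_right gam_cexp_integrable)
  have intP: "integrable (M \<Otimes>\<^sub>M gam) (case_prod \<Psi>)"
    by (rule P.Fubini_integrable) (use int1 int2 in auto)
  have fub: "(\<integral>y. (\<integral>w. \<Psi> w y \<partial>M) \<partial>gam) = (\<integral>w. (\<integral>y. \<Psi> w y \<partial>gam) \<partial>M)"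
    by (rule P.Fubini_integral[OF intP])
  have E\<Psi>: "(\<integral>w. \<Psi> w y \<partial>M) = exp (complex_of_real (- (lam\<^sup>2 * inner a b * x * y)))" for y
  proof -
    define q where "q = (- lam * x) *\<^sub>R a + (lam * y) *\<^sub>R b"
    define p' where "p' = (lam * x) *\<^sub>R a + (lam * y) *\<^sub>R b"
    have qT: "q \<in> T" unfolding q_def by (rule lin_T[OF aT bT])
    have pT: "p' \<in> T" unfolding p'_def by (rule lin_T[OF aT bT])
    have "(\<integral>w. \<Psi> w y \<partial>M) = (\<integral>w. exp (complex_of_real (Lf U 0 q w) + \<i> * complex_of_real (Lf U p' 0 w)) \<partial>M)"
    proof (rule Bochner_Integration.integral_cong)
      fix w assume w: "w \<in> space M"
      have Uq: "U q w = complex_of_real (- lam * x) * U a w + complex_of_real (lam * y) * U b w"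
        unfolding q_def by (rule lin_U[OF w aT bT])
      have Up: "U p' w = complex_of_real (lam * x) * U a w + complex_of_real (lam * y) * U b w"
        unfolding p'_def by (rule lin_U[OF w aT bT])
      have "\<Psi> w y = exp ((\<i> * complex_of_real lam * U a w) * complex_of_real x
            + (\<i> * complex_of_real lam * cnj (U b w)) * complex_of_real y)"
        unfolding \<Psi>_def by (simp add: mult_exp_exp)
      also have "(\<i> * complex_of_real lam * U a w) * complex_of_real x
            + (\<i> * complex_of_real lam * cnj (U b w)) * complex_of_real y
            = complex_of_real (Lf U 0 q w) + \<i> * complex_of_real (Lf U p' 0 w)"
        by (rule complex_eqI) (simp_all add: Lf_def Uq Up zero_U[OF w aT] algebra_simps)
      finally show "\<Psi> w y = exp (complex_of_real (Lf U 0 q w) + \<i> * complex_of_real (Lf U p' 0 w))" .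
    qed simp
    also have "\<dots> = exp (complex_of_real ((norm (0::'h))\<^sup>2 + (norm q)\<^sup>2 - (norm p')\<^sup>2 - (norm (0::'h))\<^sup>2) / 4
           + \<i> * complex_of_real (inner 0 p' + inner q 0) / 2)"
      by (rule AC2[OF 0 qT pT 0])
    also have "\<dots> = exp (complex_of_real (- (lam\<^sup>2 * inner a b * x * y)))"
    proof (rule arg_cong[where f=exp])
      have "(norm q)\<^sup>2 - (norm p')\<^sup>2 = - 4 * (lam\<^sup>2 * inner a b * x * y)"
        unfolding q_def p'_def power2_norm_eq_inner
        by (simp add: inner_add_left inner_add_right inner_commute algebra_simps power2_eq_square)
      then show "complex_of_real ((norm (0::'h))\<^sup>2 + (norm q)\<^sup>2 - (norm p')\<^sup>2 - (norm (0::'h))\<^sup>2) / 4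
           + \<i> * complex_of_real (inner 0 p' + inner q 0) / 2 = complex_of_real (- (lam\<^sup>2 * inner a b * x * y))"
        by simp
    qed
    finally show ?thesis .
  qed
  have last: "(\<integral>y. exp (complex_of_real (- (lam\<^sup>2 * inner a b * x * y))) \<partial>gam)
      = complex_of_real (exp ((lam^4 * (inner a b)\<^sup>2) * x\<^sup>2 / 2))"
  proof -
    define t where "t = - (lam\<^sup>2 * inner a b * x)"
    have "(\<integral>y. exp (complex_of_real (- (lam\<^sup>2 * inner a b * x * y))) \<partial>gam)
        = (\<integral>y. exp (complex_of_real t * complex_of_real y) \<partial>gam)"
      by (simp add: t_def)
    also have "\<dots> = exp ((complex_of_real t)\<^sup>2 / 2)" by (rule gam_mgf)
    also have "\<dots> = exp (complex_of_real (t\<^sup>2 / 2))" by simp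
    also have "\<dots> = complex_of_real (exp ((lam^4 * (inner a b)\<^sup>2) * x\<^sup>2 / 2))"
      unfolding exp_of_real t_def by (simp add: power_mult_distrib)
    finally show ?thesis .
  qed
  have "(\<integral>w. exp ((\<i> * complex_of_real lam * U a w) * complex_of_real x)
        * exp (- (complex_of_real lam * cnj (U b w))\<^sup>2 / 2) \<partial>M) = (\<integral>w. (\<integral>y. \<Psi> w y \<partial>gam) \<partial>M)"
    by (simp add: inner)
  also have "\<dots> = (\<integral>y. (\<integral>w. \<Psi> w y \<partial>M) \<partial>gam)" by (rule fub[symmetric])
  also have "\<dots> = (\<integral>y. exp (complex_of_real (- (lam\<^sup>2 * inner a b * x * y))) \<partial>gam)"
    by (simp add: E\<Psi>)
  also have "\<dots> = complex_of_real (exp ((lam^4 * (inner a b)\<^sup>2) * x\<^sup>2 / 2))" by (rule last)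
  finally show ?thesis .
qed

end
end

context cwn
begin

lemma int_sq0:
  assumes hT: "h \<in> T" "norm h \<le> 1" and l: "0 < lam" "lam < 1"
  shows "integrable M (\<lambda>w. exp (lam^2 * (Lf U 0 h w)\<^sup>2))"
proof -
  have 0: "0 \<in> T" using scale_T[OF hT(1), of 0] by simp
  have "lam^2 * ((norm (0::'h))\<^sup>2 + (norm h)\<^sup>2) < 1"
  proof -
    have "(norm h)^2 \<le> 1" using hT(2) by (simp add: power_le_one)
    moreover have "lam^2 < 1" using l by (simp add: power_less_one_iff)
    moreover have "lam^2 \<ge> 0" by simp
    ultimately have "lam^2 * (norm h)^2 < 1"
      by (metis dual_order.strict_trans2 mult_left_le)
    then show ?thesis by simp
  qed
  then show ?thesis by (rule int_sq_L[OF 0 hT(1)])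
qed

context
  fixes a b :: 'h and lam :: real
  assumes aT: "a \<in> T" and bT: "b \<in> T" and na: "norm a \<le> 1" and nb: "norm b \<le> 1"
    and l0: "0 < lam" and l1: "lam < 1"
begin

lemma main_E:
  "(\<integral>w. exp (- (complex_of_real lam * U a w)\<^sup>2 / 2)
        * exp (- (complex_of_real lam * cnj (U b w))\<^sup>2 / 2) \<partial>M)
    = complex_of_real (1 / sqrt (1 - (inner a b)\<^sup>2 * lam ^ 4))"
proof -
  interpret prob_space M by (rule prob)
  interpret P: pair_sigma_finite M gam by (rule pair_gam)
  have 0: "0 \<in> T" using scale_T[OF aT, of 0] by simp
  define \<Theta> where "\<Theta> w x = exp ((\<i> * complex_of_real lam * U a w) * complex_of_real x)
      * exp (- (complex_of_real lam * cnj (U b w))\<^sup>2 / 2)" for w x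
  have \<Theta>m[measurable]: "case_prod \<Theta> \<in> borel_measurable (M \<Otimes>\<^sub>M gam)"
  proof -
    define ua where "ua = U a"
    define ub where "ub = U b"
    have [measurable]: "ua \<in> borel_measurable M" "ub \<in> borel_measurable M"
      unfolding ua_def ub_def using aT bT by (auto intro: meas_U)
    have m1[measurable]: "(\<lambda>p. ua (fst p)) \<in> borel_measurable (M \<Otimes>\<^sub>M gam)"
      by (rule measurable_compose[OF measurable_fst]) simp
    have m2[measurable]: "(\<lambda>p. ub (fst p)) \<in> borel_measurable (M \<Otimes>\<^sub>M gam)"
      by (rule measurable_compose[OF measurable_fst]) simp
    have m3[measurable]: "(\<lambda>p. snd p) \<in> borel_measurable (M \<Otimes>\<^sub>M gam)"
      by (rule measurable_compose[OF measurable_snd]) simp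
    have cm: "cnj \<in> borel_measurable borel"
      by (rule borel_measurable_continuous_onI) (intro continuous_intros)
    have m4[measurable]: "(\<lambda>p. cnj (ub (fst p))) \<in> borel_measurable (M \<Otimes>\<^sub>M gam)"
      by (rule measurable_compose[OF m2 cm])
    have m5[measurable]: "(\<lambda>p. complex_of_real (snd p)) \<in> borel_measurable (M \<Otimes>\<^sub>M gam)"
      by (rule measurable_compose[OF m3 borel_measurable_of_real])
    have "(\<lambda>p. exp ((\<i> * complex_of_real lam * ua (fst p)) * complex_of_real (snd p))
      * exp (- (complex_of_real lam * cnj (ub (fst p)))\<^sup>2 / 2)) \<in> borel_measurable (M \<Otimes>\<^sub>M gam)"
      by measurable
    then show ?thesis unfolding \<Theta>_def[abs_def] ua_def ub_def by (simp add: case_prod_beta')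
  qed
  have inner: "(\<integral>x. \<Theta> w x \<partial>gam) = exp (- (complex_of_real lam * U a w)\<^sup>2 / 2)
        * exp (- (complex_of_real lam * cnj (U b w))\<^sup>2 / 2)" for w
  proof -
    have "(\<integral>x. \<Theta> w x \<partial>gam) = exp ((\<i> * complex_of_real lam * U a w)\<^sup>2 / 2)
        * exp (- (complex_of_real lam * cnj (U b w))\<^sup>2 / 2)"
      unfolding \<Theta>_def by (simp add: gam_mgf)
    also have "exp ((\<i> * complex_of_real lam * U a w)\<^sup>2 / 2) = exp (- (complex_of_real lam * U a w)\<^sup>2 / 2)"
      by (rule arg_cong[where f=exp]) (simp add: power_mult_distrib)
    finally show ?thesis .
  qed
  have nE2: "norm (exp (- (complex_of_real lam * cnj (U b w))\<^sup>2 / 2)) \<le> exp ((lam * Im (U b w))\<^sup>2 / 2)" for w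
  proof -
    have "Re (- (complex_of_real lam * cnj (U b w))\<^sup>2 / 2) = - (lam^2 * ((Re (U b w))\<^sup>2 - (Im (U b w))\<^sup>2)) / 2"
      by (simp add: power2_eq_square algebra_simps) (simp add: field_simps)
    also have "\<dots> \<le> (lam * Im (U b w))\<^sup>2 / 2"
      by (simp add: power_mult_distrib algebra_simps)
    finally show ?thesis by simp
  qed
  have n\<Theta>: "(\<integral>x. norm (\<Theta> w x) \<partial>gam) = exp ((lam * Im (U a w))\<^sup>2 / 2) * norm (exp (- (complex_of_real lam * cnj (U b w))\<^sup>2 / 2))" for w
  proof -
    have "norm (\<Theta> w x) = exp ((- lam * Im (U a w)) * x) * norm (exp (- (complex_of_real lam * cnj (U b w))\<^sup>2 / 2))" for x
      unfolding \<Theta>_def norm_mult by (simp add: norm_mult)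
    then have "(\<integral>x. norm (\<Theta> w x) \<partial>gam) = (\<integral>x. exp ((- lam * Im (U a w)) * x) \<partial>gam) * norm (exp (- (complex_of_real lam * cnj (U b w))\<^sup>2 / 2))"
      by simp
    also have "\<dots> = exp ((lam * Im (U a w))\<^sup>2 / 2) * norm (exp (- (complex_of_real lam * cnj (U b w))\<^sup>2 / 2))"
      by (simp only: gam_rmgf) (simp add: power_mult_distrib)
    finally show ?thesis .
  qed
  have int1: "integrable M (\<lambda>w. \<integral>x. norm (\<Theta> w x) \<partial>gam)"
  proof -
    have [measurable]: "Lf U 0 a \<in> borel_measurable M" "Lf U 0 b \<in> borel_measurable M"
      using 0 aT bT by (auto intro: meas_L)
    have [measurable]: "U a \<in> borel_measurable M" "U b \<in> borel_measurable M"
      using aT bT by (auto intro: meas_U)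
    have mb1: "(\<lambda>w. exp ((lam * Im (U a w))\<^sup>2 / 2) * norm (exp (- (complex_of_real lam * cnj (U b w))\<^sup>2 / 2))) \<in> borel_measurable M"
    proof -
      define ua where "ua = U a"
      define ub where "ub = U b"
      have [measurable]: "ua \<in> borel_measurable M" "ub \<in> borel_measurable M"
        unfolding ua_def ub_def using aT bT by (auto intro: meas_U)
      have cm: "cnj \<in> borel_measurable borel"
        by (rule borel_measurable_continuous_onI) (intro continuous_intros)
      have [measurable]: "(\<lambda>w. cnj (ub w)) \<in> borel_measurable M"
        by (rule measurable_compose[OF _ cm]) simp
      have "(\<lambda>w. exp ((lam * Im (ua w))\<^sup>2 / 2) * norm (exp (- (complex_of_real lam * cnj (ub w))\<^sup>2 / 2))) \<in> borel_measurable M"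
        by measurable
      then show ?thesis by (simp add: ua_def ub_def)
    qed
    have "integrable M (\<lambda>w. exp ((lam * Im (U a w))\<^sup>2 / 2) * norm (exp (- (complex_of_real lam * cnj (U b w))\<^sup>2 / 2)))"
    proof (rule Bochner_Integration.integrable_bound)
      show "integrable M (\<lambda>w. (exp (lam^2 * (Lf U 0 a w)\<^sup>2) + exp (lam^2 * (Lf U 0 b w)\<^sup>2)) / 2)"
        using int_sq0[OF aT na l0 l1] int_sq0[OF bT nb l0 l1] by auto
      show "AE w in M. norm (exp ((lam * Im (U a w))\<^sup>2 / 2) * norm (exp (- (complex_of_real lam * cnj (U b w))\<^sup>2 / 2)))
           \<le> norm ((exp (lam^2 * (Lf U 0 a w)\<^sup>2) + exp (lam^2 * (Lf U 0 b w)\<^sup>2)) / 2)"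
      proof (rule AE_I2)
        fix w assume w: "w \<in> space M"
        have "exp ((lam * Im (U a w))\<^sup>2 / 2) * norm (exp (- (complex_of_real lam * cnj (U b w))\<^sup>2 / 2))
             \<le> exp ((lam * Im (U a w))\<^sup>2 / 2) * exp ((lam * Im (U b w))\<^sup>2 / 2)"
          using nE2[of w] by simp
        also have "\<dots> \<le> (exp (2 * ((lam * Im (U a w))\<^sup>2 / 2)) + exp (2 * ((lam * Im (U b w))\<^sup>2 / 2))) / 2"
          by (rule expbound)
        also have "\<dots> = (exp (lam^2 * (Lf U 0 a w)\<^sup>2) + exp (lam^2 * (Lf U 0 b w)\<^sup>2)) / 2"
          using Im_L[OF w aT aT] Im_L[OF w aT bT] by (simp add: power_mult_distrib)
        finally show "norm (exp ((lam * Im (U a w))\<^sup>2 / 2) * norm (exp (- (complex_of_real lam * cnj (U b w))\<^sup>2 / 2)))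
           \<le> norm ((exp (lam^2 * (Lf U 0 a w)\<^sup>2) + exp (lam^2 * (Lf U 0 b w)\<^sup>2)) / 2)"
          by (simp add: add_pos_pos)
      qed
    qed (rule mb1)
    then show ?thesis by (simp add: n\<Theta>)
  qed
  have int2: "AE w in M. integrable gam (\<lambda>x. \<Theta> w x)"
    unfolding \<Theta>_def by (intro AE_I2 Bochner_Integration.integrable_mult_left gam_cexp_integrable)
  have intP: "integrable (M \<Otimes>\<^sub>M gam) (case_prod \<Theta>)"
    by (rule P.Fubini_integrable) (use int1 int2 in auto)
  have fub: "(\<integral>x. (\<integral>w. \<Theta> w x \<partial>M) \<partial>gam) = (\<integral>w. (\<integral>x. \<Theta> w x \<partial>gam) \<partial>M)"
    by (rule P.Fubini_integral[OF intP])
  have E\<Theta>: "(\<integral>w. \<Theta> w x \<partial>M) = complex_of_real (exp ((lam^4 * (inner a b)\<^sup>2) * x\<^sup>2 / 2))" for x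
    unfolding \<Theta>_def by (rule stepA[OF aT bT na nb l0 l1])
  have \<beta>: "lam^4 * (inner a b)\<^sup>2 < 1"
  proof -
    have "\<bar>inner a b\<bar> \<le> norm a * norm b" by (rule Cauchy_Schwarz_ineq2)
    also have "\<dots> \<le> 1" using na nb by (simp add: mult_le_one)
    finally have "(inner a b)\<^sup>2 \<le> 1" using abs_le_square_iff[of "inner a b" 1] by simp
    moreover have "lam^4 < 1" using l0 l1 by (simp add: power_less_one_iff)
    moreover have "lam^4 \<ge> 0" by simp
    ultimately show ?thesis
      by (metis dual_order.strict_trans2 mult_right_le_one_le zero_le_power2 le_less)
  qed
  have "(\<integral>w. exp (- (complex_of_real lam * U a w)\<^sup>2 / 2)
        * exp (- (complex_of_real lam * cnj (U b w))\<^sup>2 / 2) \<partial>M) = (\<integral>w. (\<integral>x. \<Theta> w x \<partial>gam) \<partial>M)"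
    by (simp add: inner)
  also have "\<dots> = (\<integral>x. (\<integral>w. \<Theta> w x \<partial>M) \<partial>gam)" by (rule fub[symmetric])
  also have "\<dots> = (\<integral>x. complex_of_real (exp ((lam^4 * (inner a b)\<^sup>2) * x\<^sup>2 / 2)) \<partial>gam)"
    by (simp add: E\<Theta>)
  also have "\<dots> = complex_of_real (\<integral>x. exp ((lam^4 * (inner a b)\<^sup>2) * x\<^sup>2 / 2) \<partial>gam)"
    by simp
  also have "\<dots> = complex_of_real (1 / sqrt (1 - lam^4 * (inner a b)\<^sup>2))"
    by (simp only: gam_quad(2)[OF \<beta>])
  finally show ?thesis by (simp add: mult.commute)
qed

end
end

lemma orth_inner_sum:
  fixes e :: "nat \<Rightarrow> 'h::real_inner"
  assumes "finite I" and orth: "\<forall>m\<in>I. \<forall>n\<in>I. e m \<bullet> e n = (if m = n then 1 else 0)"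
  shows "(\<Sum>m\<in>I. c m *\<^sub>R e m) \<bullet> (\<Sum>n\<in>I. d n *\<^sub>R e n) = (\<Sum>m\<in>I. c m * d m)"
proof -
  have "(\<Sum>m\<in>I. c m *\<^sub>R e m) \<bullet> (\<Sum>n\<in>I. d n *\<^sub>R e n) = (\<Sum>m\<in>I. c m * (\<Sum>n\<in>I. d n * (e m \<bullet> e n)))"
    by (simp add: inner_sum_left inner_sum_right sum_distrib_left mult.assoc) (subst sum.swap, simp add: ac_simps)
  also have "\<dots> = (\<Sum>m\<in>I. c m * d m)"
  proof (rule sum.cong[OF refl])
    fix m assume m: "m \<in> I"
    have "(\<Sum>n\<in>I. d n * (e m \<bullet> e n)) = (\<Sum>n\<in>I. if m = n then d n else 0)"
      by (rule sum.cong[OF refl]) (use orth m in auto)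
    also have "\<dots> = d m" using m assms(1) by simp
    finally show "c m * (\<Sum>n\<in>I. d n * (e m \<bullet> e n)) = c m * d m" by simp
  qed
  finally show ?thesis .
qed

lemma bessel:
  fixes e :: "nat \<Rightarrow> 'h::real_inner"
  assumes orth: "\<forall>m\<in>{1..k}. \<forall>n\<in>{1..k}. e m \<bullet> e n = (if m = n then 1 else 0)"
  shows "norm (projL2 k e h) \<le> norm h"
proof -
  define P where "P = projL2 k e h"
  have PP: "P \<bullet> P = (\<Sum>m\<in>{1..k}. (e m \<bullet> h) * (e m \<bullet> h))"
    unfolding P_def projL2_def by (rule orth_inner_sum[OF _ orth]) simp
  have hP: "h \<bullet> P = (\<Sum>m\<in>{1..k}. (e m \<bullet> h) * (e m \<bullet> h))"
    unfolding P_def projL2_def by (simp add: inner_sum_right inner_commute)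
  have "(norm P)^2 = h \<bullet> P" using PP hP by (simp add: power2_norm_eq_inner)
  also have "\<dots> \<le> norm h * norm P" by (rule norm_cauchy_schwarz)
  finally have "norm P * norm P \<le> norm h * norm P" by (simp add: power2_eq_square)
  then have "norm P \<le> norm h"
    by (cases "norm P = 0") (auto simp: mult_le_cancel_right)
  then show ?thesis by (simp add: P_def)
qed

lemma pairC_eq:
  "pairC (lam *\<^sub>R projP k e u) h
     = complex_of_real lam * (\<Sum>m\<in>{1..k}. complex_of_real (e m \<bullet> h) * u (e m))"
  by (rule complex_eqI)
     (simp_all add: pairC_def projP_def inner_sum_left sum_distrib_left algebra_simps)

context cwn
begin

lemma sum_T:
  assumes "0 \<in> T" "finite I" "\<forall>m\<in>I. e m \<in> T"
  shows "(\<Sum>m\<in>I. c m *\<^sub>R e m) \<in> T"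
  using assms(2,3) by (induction I rule: finite_induct) (auto intro: add_T scale_T assms(1))

lemma sum_U:
  assumes w: "w \<in> space M" and 0: "0 \<in> T" and fin: "finite I" and eT: "\<forall>m\<in>I. e m \<in> T"
  shows "U (\<Sum>m\<in>I. c m *\<^sub>R e m) w = (\<Sum>m\<in>I. complex_of_real (c m) * U (e m) w)"
  using fin eT
proof (induction I rule: finite_induct)
  case empty
  then show ?case using zero_U[OF w 0] by simp
next
  case (insert x F)
  have xT: "c x *\<^sub>R e x \<in> T" using insert by (auto intro: scale_T)
  have FT: "(\<Sum>m\<in>F. c m *\<^sub>R e m) \<in> T" using insert by (intro sum_T[OF 0]) auto
  have "U (\<Sum>m\<in>insert x F. c m *\<^sub>R e m) w = U (c x *\<^sub>R e x + (\<Sum>m\<in>F. c m *\<^sub>R e m)) w"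
    using insert by simp
  also have "\<dots> = U (c x *\<^sub>R e x) w + U (\<Sum>m\<in>F. c m *\<^sub>R e m) w"
    by (rule add_U[OF w xT FT])
  also have "\<dots> = complex_of_real (c x) * U (e x) w + (\<Sum>m\<in>F. complex_of_real (c m) * U (e m) w)"
    using insert w by (simp add: scale_U)
  finally show ?case using insert by simp
qed

end

theorem lemmaA5:
  fixes T :: "'h::real_inner set" and M :: "'w measure" and U :: "'h \<Rightarrow> 'w \<Rightarrow> complex"
    and f g :: 'h and k :: nat and e :: "nat \<Rightarrow> 'h" and lam :: real
  assumes nu: "complex_white_noise T M U"
    and f0: "f \<noteq> 0" and g0: "g \<noteq> 0"
    and k1: "k \<ge> 1"
    and eT: "\<forall>m\<in>{1..k}. e m \<in> T"
    and orth: "\<forall>m\<in>{1..k}. \<forall>n\<in>{1..k}. e m \<bullet> e n = (if m = n then 1 else 0)"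
    and lam: "0 < lam" "lam < 1"
  shows "(\<integral>w. S_donsker f (lam *\<^sub>R projP k e (\<lambda>h. U h w))
               * cnj (S_donsker g (lam *\<^sub>R projP k e (\<lambda>h. U h w))) \<partial>M)
         = complex_of_real (1 / (2 * pi * norm f * norm g)
             * (1 / sqrt (1 - ((projL2 k e f /\<^sub>R norm f) \<bullet> (projL2 k e g /\<^sub>R norm g))\<^sup>2 * lam ^ 4)))"
proof -
  interpret cwn T M U using nu by (simp add: cwn_def)
  have e1: "e 1 \<in> T" using eT k1 by auto
  have 0: "0 \<in> T" using scale_T[OF e1, of 0] by simp
  have PT: "projL2 k e h \<in> T" for h
    unfolding projL2_def by (rule sum_T[OF 0]) (use eT in auto)
  have aT: "projL2 k e h /\<^sub>R norm h \<in> T" for h by (rule scale_T[OF PT])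
  have na: "norm (projL2 k e h /\<^sub>R norm h) \<le> 1" if "h \<noteq> 0" for h
  proof -
    have "norm (projL2 k e h /\<^sub>R norm h) = norm (projL2 k e h) / norm h" by (simp add: divide_inverse_commute)
    also have "\<dots> \<le> 1" using bessel[OF orth, of h] that by simp
    finally show ?thesis .
  qed
  have key: "S_donsker h (lam *\<^sub>R projP k e (\<lambda>h'. U h' w))
      = exp (- (complex_of_real lam * U (projL2 k e h /\<^sub>R norm h) w)\<^sup>2 / 2) / complex_of_real (sqrt (2 * pi) * norm h)"
    if h0: "h \<noteq> 0" and w: "w \<in> space M" for h w
  proof -
    have "pairC (lam *\<^sub>R projP k e (\<lambda>h'. U h' w)) h
        = complex_of_real lam * (\<Sum>m\<in>{1..k}. complex_of_real (e m \<bullet> h) * U (e m) w)"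
      by (rule pairC_eq)
    also have "(\<Sum>m\<in>{1..k}. complex_of_real (e m \<bullet> h) * U (e m) w) = U (projL2 k e h) w"
      unfolding projL2_def by (rule sum_U[OF w 0, symmetric]) (use eT in auto)
    also have "projL2 k e h = norm h *\<^sub>R (projL2 k e h /\<^sub>R norm h)" using h0 by simp
    also have "U (norm h *\<^sub>R (projL2 k e h /\<^sub>R norm h)) w = complex_of_real (norm h) * U (projL2 k e h /\<^sub>R norm h) w"
      by (rule scale_U[OF w aT])
    finally have pc: "pairC (lam *\<^sub>R projP k e (\<lambda>h'. U h' w)) h
       = complex_of_real lam * (complex_of_real (norm h) * U (projL2 k e h /\<^sub>R norm h) w)" .
    have nh: "complex_of_real (norm h) \<noteq> 0" using h0 by simp
    have "- (pairC (lam *\<^sub>R projP k e (\<lambda>h'. U h' w)) h)\<^sup>2 / complex_of_real (2 * (norm h)\<^sup>2)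
        = - (complex_of_real lam * U (projL2 k e h /\<^sub>R norm h) w)\<^sup>2 / 2"
      unfolding pc using nh by (simp add: power_mult_distrib field_simps)
    then show ?thesis unfolding S_donsker_def
      by (rule arg_cong[where f="\<lambda>z. exp z / complex_of_real (sqrt (2 * pi) * norm h)"])
  qed
  let ?a = "projL2 k e f /\<^sub>R norm f"
  let ?b = "projL2 k e g /\<^sub>R norm g"
  have "(\<integral>w. S_donsker f (lam *\<^sub>R projP k e (\<lambda>h. U h w))
               * cnj (S_donsker g (lam *\<^sub>R projP k e (\<lambda>h. U h w))) \<partial>M)
      = (\<integral>w. complex_of_real (1 / (2 * pi * norm f * norm g)) *
          (exp (- (complex_of_real lam * U ?a w)\<^sup>2 / 2)
        * exp (- (complex_of_real lam * cnj (U ?b w))\<^sup>2 / 2)) \<partial>M)"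
  proof (rule Bochner_Integration.integral_cong[OF refl])
    fix w assume w: "w \<in> space M"
    have s0: "sqrt (pi * 2) * sqrt (pi * 2) = pi * 2" by simp
    have s: "complex_of_real (sqrt (pi * 2)) * complex_of_real (sqrt (pi * 2)) = complex_of_real pi * 2"
      using s0 by (metis of_real_mult of_real_numeral)
    have c: "cnj (exp (- (complex_of_real lam * U ?b w)\<^sup>2 / 2)) = exp (- (complex_of_real lam * cnj (U ?b w))\<^sup>2 / 2)"
      by (simp add: exp_cnj)
    show "S_donsker f (lam *\<^sub>R projP k e (\<lambda>h. U h w)) * cnj (S_donsker g (lam *\<^sub>R projP k e (\<lambda>h. U h w)))
      = complex_of_real (1 / (2 * pi * norm f * norm g)) *
          (exp (- (complex_of_real lam * U ?a w)\<^sup>2 / 2)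
        * exp (- (complex_of_real lam * cnj (U ?b w))\<^sup>2 / 2))"
      unfolding key[OF f0 w] key[OF g0 w] complex_cnj_divide c complex_cnj_complex_of_real
      using f0 g0 by (simp add: field_simps s)
  qed
  also have "\<dots> = complex_of_real (1 / (2 * pi * norm f * norm g)) *
      (\<integral>w. exp (- (complex_of_real lam * U ?a w)\<^sup>2 / 2)
        * exp (- (complex_of_real lam * cnj (U ?b w))\<^sup>2 / 2) \<partial>M)"
    by simp
  also have "(\<integral>w. exp (- (complex_of_real lam * U ?a w)\<^sup>2 / 2)
        * exp (- (complex_of_real lam * cnj (U ?b w))\<^sup>2 / 2) \<partial>M)
      = complex_of_real (1 / sqrt (1 - (inner ?a ?b)\<^sup>2 * lam ^ 4))"
    by (rule main_E[OF aT aT na[OF f0] na[OF g0] lam])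
  finally show ?thesis by simp
qed


end
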